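(* For each positive integer $n$, the number of acyclic directed graphs on the vertex set $\{1,\dots,n\}$ is equal to the number of $n\times n$ matrices with entries in $\{0,1\}$ all of whose (complex) eigenvalues are positive real numbers.
   Context: A directed graph (digraph) on vertex set $\{1,\dots,n\}$ has, for each ordered pair $(i,j)$ with $1\le i,j\le n$, at most one edge directed from $i$ to $j$; loops (edges from $i$ to $i$) and pairs of opposite edges are permitted, parallel edges are not. A digraph is acyclic if it contains no directed cycle of any length, including cycles of length $1$ (loops) and length $2$. *)

theory Defs
  imports Main "Jordan_Normal_Form.Char_Poly"
begin

end

theory Submission
  imports Defs "Jordan_Normal_Form.Schur_Decomposition" "Jordan_Normal_Form.Jordan_Normal_Form_Uniqueness"
begin


lemma acyclic_iff_relpow:
  fixes E :: "(nat \<times> nat) set"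
  assumes E: "E \<subseteq> {1..n} \<times> {1..n}" and n: "n \<ge> 1"
  shows "acyclic E \<longleftrightarrow> E ^^ n = {}"
proof
  assume ac: "acyclic E"
  show "E ^^ n = {}"
  proof (rule ccontr)
    assume "E ^^ n \<noteq> {}"
    then obtain a b where "(a,b) \<in> E ^^ n" by auto
    then obtain f where f0: "f 0 = a" and fn: "f n = b" and fE: "\<forall>i<n. (f i, f (Suc i)) \<in> E"
      using relpow_fun_conv by metis
    have "f ` {0..n} \<subseteq> {1..n}"
    proof
      fix x assume "x \<in> f ` {0..n}"
      then obtain i where i: "i \<le> n" "x = f i" by auto
      show "x \<in> {1..n}"
      proof (cases i)
        case 0
        with fE n E i show ?thesis by fastforce
      next
        case (Suc k)
        with fE[rule_format, of k] E i show ?thesis by auto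
      qed
    qed
    hence "\<not> inj_on f {0..n}"
      using card_inj_on_le[of f "{0..n}" "{1..n}"] by fastforce
    then obtain i j where ij: "i \<le> n" "j \<le> n" "i < j" "f i = f j"
      unfolding inj_on_def by (metis atLeastAtMost_iff linorder_neqE_nat zero_le)
    have "(f i, f j) \<in> E ^^ (j - i)"
      unfolding relpow_fun_conv
      by (rule exI[of _ "\<lambda>t. f (i + t)"], insert ij fE, auto)
    hence "(f i, f i) \<in> E\<^sup>+" using ij trancl_power by (metis zero_less_diff)
    with ac show False unfolding acyclic_def by blast
  qed
next
  assume e: "E ^^ n = {}"
  show "acyclic E" unfolding acyclic_def
  proof (intro allI notI)
    fix x assume "(x,x) \<in> E\<^sup>+"
    then obtain m where m: "m > 0" "(x,x) \<in> E ^^ m" using trancl_power by blast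
    have "(x,x) \<in> E ^^ (m * t)" for t
    proof (induct t)
      case (Suc t)
      have "E ^^ (m * Suc t) = E ^^ (m * t) O E ^^ m"
        by (metis mult_Suc_right add.commute relpow_add)
      with Suc m show ?case by auto
    qed simp
    from this[of n] have "(x,x) \<in> E ^^ (n + (m*n - n))" using m by simp
    hence "E ^^ n \<noteq> {}" unfolding relpow_add by auto
    with e show False by simp
  qed
qed

definition Nnat :: "nat \<Rightarrow> (nat \<times> nat) set \<Rightarrow> nat mat" where
  "Nnat n E = mat n n (\<lambda>(i,j). if (Suc i, Suc j) \<in> E then 1 else 0)"

lemma Nnat_carrier[simp]: "Nnat n E \<in> carrier_mat n n" unfolding Nnat_def by simp
lemma Nnat_index[simp]: "i < n \<Longrightarrow> j < n \<Longrightarrow> Nnat n E $$ (i,j) = (if (Suc i, Suc j) \<in> E then 1 else 0)"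
  unfolding Nnat_def by simp
lemma Nnat_dim[simp]: "dim_row (Nnat n E) = n" "dim_col (Nnat n E) = n" unfolding Nnat_def by simp_all

lemma Nnat_pow:
  assumes E: "E \<subseteq> {1..n} \<times> {1..n}" and ij: "i < n" "j < n"
  shows "(Nnat n E ^\<^sub>m k) $$ (i,j) \<noteq> 0 \<longleftrightarrow> (Suc i, Suc j) \<in> E ^^ k"
  using ij
proof (induct k arbitrary: i j)
  case 0
  then show ?case unfolding Nnat_def by simp
next
  case (Suc k)
  let ?M = "Nnat n E"
  have "(?M ^\<^sub>m Suc k) $$ (i,j) = (\<Sum>l\<in>{0..<n}. (?M ^\<^sub>m k) $$ (i,l) * ?M $$ (l,j))"
    using Suc.prems by (simp add: scalar_prod_def)
  also have "\<dots> \<noteq> 0 \<longleftrightarrow> (\<exists>l<n. (?M ^\<^sub>m k) $$ (i,l) \<noteq> 0 \<and> ?M $$ (l,j) \<noteq> 0)"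
    by auto
  also have "\<dots> \<longleftrightarrow> (\<exists>l<n. (Suc i, Suc l) \<in> E ^^ k \<and> (Suc l, Suc j) \<in> E)"
  proof -
    have "\<And>l. l < n \<Longrightarrow> ((?M ^\<^sub>m k) $$ (i,l) \<noteq> 0 \<and> ?M $$ (l,j) \<noteq> 0) \<longleftrightarrow> ((Suc i, Suc l) \<in> E ^^ k \<and> (Suc l, Suc j) \<in> E)"
      using Suc.hyps[of i] Suc.prems by simp
    then show ?thesis by blast
  qed
  also have "\<dots> \<longleftrightarrow> (Suc i, Suc j) \<in> E ^^ Suc k"
  proof
    assume "(Suc i, Suc j) \<in> E ^^ Suc k"
    then obtain y where y: "(Suc i, y) \<in> E ^^ k" "(y, Suc j) \<in> E" by auto
    with E obtain l where "y = Suc l" "l < n" by (cases y) auto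
    with y show "\<exists>l<n. (Suc i, Suc l) \<in> E ^^ k \<and> (Suc l, Suc j) \<in> E" by auto
  qed auto
  finally show ?case .
qed

lemma Nnat_pow_zero:
  assumes E: "E \<subseteq> {1..n} \<times> {1..n}" and n: "n \<ge> 1"
  shows "Nnat n E ^\<^sub>m n = 0\<^sub>m n n \<longleftrightarrow> acyclic E"
proof -
  have "Nnat n E ^\<^sub>m n = 0\<^sub>m n n \<longleftrightarrow> (\<forall>i<n. \<forall>j<n. (Nnat n E ^\<^sub>m n) $$ (i,j) = 0)"
  proof
    assume "\<forall>i<n. \<forall>j<n. (Nnat n E ^\<^sub>m n) $$ (i,j) = 0"
    then show "Nnat n E ^\<^sub>m n = 0\<^sub>m n n"
      by (intro eq_matI) (auto simp: pow_mat_dim_square[OF Nnat_carrier])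
  qed (auto simp: pow_mat_dim_square[OF Nnat_carrier])
  also have "\<dots> \<longleftrightarrow> (\<forall>i<n. \<forall>j<n. (Suc i, Suc j) \<notin> E ^^ n)"
    using Nnat_pow[OF E] by blast
  also have "\<dots> \<longleftrightarrow> E ^^ n = {}"
  proof
    assume h: "\<forall>i<n. \<forall>j<n. (Suc i, Suc j) \<notin> E ^^ n"
    show "E ^^ n = {}"
    proof (rule ccontr)
      assume "E ^^ n \<noteq> {}"
      then obtain a b where ab: "(a,b) \<in> E ^^ n" by auto
      from n obtain m where m: "n = Suc m" by (cases n) auto
      have "(a,b) \<in> E O E ^^ m" using ab unfolding m by (simp add: relpow_commute)
      hence a: "a \<in> {1..n}" using E by auto
      have "(a,b) \<in> E ^^ m O E" using ab unfolding m by simp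
      hence b: "b \<in> {1..n}" using E by auto
      from a obtain i where i: "a = Suc i" "i < n" by (cases a) auto
      from b obtain j where j: "b = Suc j" "j < n" by (cases b) auto
      from h i j ab show False by auto
    qed
  qed auto
  finally show ?thesis using acyclic_iff_relpow[OF E n] by simp
qed



lemma real_key:
  fixes r :: "nat \<Rightarrow> real"
  assumes pos: "\<And>i. i < n \<Longrightarrow> r i > 0" and s: "(\<Sum>i<n. r i) \<le> n" and p: "(\<Prod>i<n. r i) \<ge> 1"
  shows "\<And>i. i < n \<Longrightarrow> r i = 1"
proof -
  have "ln (\<Prod>i<n. r i) = (\<Sum>i<n. ln (r i))" by (rule ln_prod, insert pos, auto simp: less_imp_neq[symmetric])
  moreover have "ln (\<Prod>i<n. r i) \<ge> 0" using p by simp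
  ultimately have l: "(\<Sum>i<n. ln (r i)) \<ge> 0" by simp
  define d where "d i = r i - 1 - ln (r i)" for i
  have dn: "\<And>i. i < n \<Longrightarrow> d i \<ge> 0" unfolding d_def using pos ln_le_minus_one by fastforce
  have "(\<Sum>i<n. d i) = (\<Sum>i<n. r i) - n - (\<Sum>i<n. ln (r i))"
    unfolding d_def by (simp add: sum_subtractf)
  also have "\<dots> \<le> 0" using s l by simp
  finally have "(\<Sum>i<n. d i) \<le> 0" .
  with dn have "(\<Sum>i<n. d i) = 0" by (meson antisym lessThan_iff sum_nonneg)
  with dn have "\<forall>i\<in>{..<n}. d i = 0" by (subst sum_nonneg_eq_0_iff[symmetric]) auto
  then show "\<And>i. i < n \<Longrightarrow> r i = 1" using pos ln_eq_minus_one unfolding d_def by force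
qed

definition tr :: "complex mat \<Rightarrow> complex" where "tr M = (\<Sum>i<dim_row M. M $$ (i,i))"

lemma tr_mult_expand: "X \<in> carrier_mat n n \<Longrightarrow> Y \<in> carrier_mat n n \<Longrightarrow>
  tr (X * Y) = (\<Sum>i<n. \<Sum>k<n. X $$ (i,k) * Y $$ (k,i))"
  unfolding tr_def by (simp add: scalar_prod_def atLeast0LessThan)

lemma tr_comm: "X \<in> carrier_mat n n \<Longrightarrow> Y \<in> carrier_mat n n \<Longrightarrow> tr (X * Y) = tr (Y * X)"
  unfolding tr_mult_expand by (subst sum.swap) (simp add: mult.commute)

lemma strict_ut_pow:
  fixes C :: "'a :: comm_ring_1 mat"
  assumes C: "C \<in> carrier_mat n n" and z: "\<And>i j. i < n \<Longrightarrow> j < n \<Longrightarrow> j \<le> i \<Longrightarrow> C $$ (i,j) = 0"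
  shows "i < n \<Longrightarrow> j < n \<Longrightarrow> j < i + k \<Longrightarrow> (C ^\<^sub>m k) $$ (i,j) = 0"
proof (induct k arbitrary: i j)
  case 0
  then show ?case using C by simp
next
  case (Suc k)
  have "(C ^\<^sub>m Suc k) $$ (i,j) = (\<Sum>l\<in>{0..<n}. (C ^\<^sub>m k) $$ (i,l) * C $$ (l,j))"
    using Suc.prems C by (simp add: scalar_prod_def)
  also have "\<dots> = 0"
  proof (rule sum.neutral, intro ballI)
    fix l assume l: "l \<in> {0..<n}"
    show "(C ^\<^sub>m k) $$ (i,l) * C $$ (l,j) = 0"
    proof (cases "l < i + k")
      case True then show ?thesis using Suc l by simp
    next
      case False then show ?thesis using Suc l z by simp
    qed
  qed
  finally show ?case .
qed

lemma spectral:
  fixes A :: "complex mat"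
  assumes A: "A \<in> carrier_mat n n" and ent: "\<forall>i<n. \<forall>j<n. A $$ (i,j) \<in> {0,1}"
    and ev: "\<forall>z. eigenvalue A z \<longrightarrow> z \<in> \<real> \<and> Re z > 0"
  shows "(\<forall>i<n. A $$ (i,i) = 1) \<and> (char_matrix A 1) ^\<^sub>m n = 0\<^sub>m n n"
proof -
  obtain es where cp: "char_poly A = (\<Prod>a\<leftarrow>es. [:-a,1:])" and len: "length es = n"
    using char_poly_factorized[OF A] by blast
  obtain B P Q where sd: "schur_decomposition A es = (B,P,Q)" by (cases "schur_decomposition A es") auto
  from schur_decomposition[OF A cp sd] have sim: "similar_mat_wit A B P Q"
    and ut: "upper_triangular B" and dg: "diag_mat B = es" by auto
  from similar_mat_witD2[OF A sim] have B: "B \<in> carrier_mat n n" and P: "P \<in> carrier_mat n n"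
    and Q: "Q \<in> carrier_mat n n" and PQ: "P * Q = 1\<^sub>m n" and QP: "Q * P = 1\<^sub>m n" and AB: "A = P * B * Q"
    by auto
  define e where "e i = B $$ (i,i)" for i
  have es: "es = map e [0..<n]" using dg B unfolding diag_mat_def e_def by auto
  have eig: "eigenvalue A (e i)" if i: "i < n" for i
  proof -
    have "e i \<in> set es" using es i by auto
    then have "poly (char_poly A) (e i) = 0" unfolding cp
      by (induct es) (auto simp: )
    then show ?thesis using eigenvalue_root_char_poly[OF A] by simp
  qed
  define r where "r i = Re (e i)" for i
  have er: "e i = of_real (r i)" and rpos: "r i > 0" if "i < n" for i
    using ev eig[OF that] unfolding r_def by (auto simp: Reals_def)
  define A' where "A' = map_mat (\<lambda>x. if x = 0 then 0 else 1 :: int) A"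
  have AA': "A = map_mat of_int A'"
    by (rule eq_matI, insert A ent, auto simp: A'_def)
  have "det A = of_int (det A')" unfolding AA' by simp
  moreover have "det A = det B" by (rule det_similar, unfold similar_mat_def, insert sim, auto)
  moreover have "det B = (\<Prod>i<n. e i)"
    unfolding det_upper_triangular[OF ut B] dg es
    by (simp add: prod.distinct_set_conv_list[symmetric] atLeast0LessThan)
  moreover have "(\<Prod>i<n. e i) = of_real (\<Prod>i<n. r i)" using er by simp
  ultimately have "of_real (\<Prod>i<n. r i) = (of_int (det A') :: complex)" by simp
  then have "(\<Prod>i<n. r i) = of_int (det A')"
    by (metis of_real_eq_iff of_real_of_int_eq)
  moreover have "(\<Prod>i<n. r i) > 0" by (rule prod_pos, insert rpos, auto)
  ultimately have p1: "(\<Prod>i<n. r i) \<ge> 1" by simp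
  have "tr A = tr B"
  proof -
    have "tr A = tr ((P * B) * Q)" using AB by simp
    also have "\<dots> = tr (Q * (P * B))" by (rule tr_comm[of _ n], insert P B Q, auto)
    also have "Q * (P * B) = (Q * P) * B" using P B Q by (simp add: assoc_mult_mat)
    also have "\<dots> = B" using QP B by simp
    finally show ?thesis .
  qed
  also have "tr B = (\<Sum>i<n. e i)" unfolding tr_def e_def using B by simp
  also have "\<dots> = of_real (\<Sum>i<n. r i)" using er by simp
  finally have trA: "tr A = of_real (\<Sum>i<n. r i)" .
  have reA: "Re (tr A) = (\<Sum>i<n. Re (A $$ (i,i)))" unfolding tr_def using A by (simp add: Re_sum)
  have le1: "Re (A $$ (i,i)) \<le> 1" if "i < n" for i using ent that by fastforce
  have "(\<Sum>i<n. Re (A $$ (i,i))) \<le> (\<Sum>i<n. 1)" by (rule sum_mono, insert le1, auto)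
  then have s1: "(\<Sum>i<n. r i) \<le> n" using trA reA by simp
  from real_key[of n r, OF rpos s1 p1] have r1: "\<And>i. i < n \<Longrightarrow> r i = 1" by auto
  have "(\<Sum>i<n. Re (A $$ (i,i))) = n" using trA reA r1 by simp
  then have "(\<Sum>i<n. 1 - Re (A $$ (i,i))) = 0" by (simp add: sum_subtractf)
  then have "\<forall>i\<in>{..<n}. 1 - Re (A $$ (i,i)) = 0" using le1 by (subst sum_nonneg_eq_0_iff[symmetric]) auto
  then have diag: "\<forall>i<n. A $$ (i,i) = 1"
  proof (intro allI impI)
    fix i assume i: "i < n" and h: "\<forall>i\<in>{..<n}. 1 - Re (A $$ (i,i)) = 0"
    from ent i have "A $$ (i,i) = 0 \<or> A $$ (i,i) = 1" by auto
    moreover from h i have "Re (A $$ (i,i)) = 1" by auto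
    ultimately show "A $$ (i,i) = 1" by auto
  qed
  have simC: "similar_mat_wit (char_matrix A 1) (char_matrix B 1) P Q"
    by (rule similar_mat_wit_char_matrix[OF sim])
  have C: "char_matrix B 1 \<in> carrier_mat n n" using B by simp
  have Cz: "char_matrix B 1 $$ (i,j) = 0" if "i < n" "j < n" "j \<le> i" for i j
  proof (cases "j = i")
    case True then show ?thesis using that er r1 B unfolding char_matrix_def e_def by simp
  next
    case False then show ?thesis using that ut B unfolding char_matrix_def upper_triangular_def by auto
  qed
  have "char_matrix B 1 ^\<^sub>m n = 0\<^sub>m n n"
    by (rule eq_matI, insert strict_ut_pow[OF C Cz, of _ _ n] C, auto)
  then have "char_matrix A 1 ^\<^sub>m n = P * 0\<^sub>m n n * Q" using similar_mat_wit_pow_id[OF simC] by simp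
  also have "\<dots> = 0\<^sub>m n n" using P Q by simp
  finally show ?thesis using diag by simp
qed



definition Nc :: "nat \<Rightarrow> (nat \<times> nat) set \<Rightarrow> complex mat" where
  "Nc n E = map_mat of_nat (Nnat n E)"

lemma Nc_carrier[simp]: "Nc n E \<in> carrier_mat n n" unfolding Nc_def by simp
lemma Nc_index[simp]: "i < n \<Longrightarrow> j < n \<Longrightarrow> Nc n E $$ (i,j) = (if (Suc i, Suc j) \<in> E then 1 else 0)"
  unfolding Nc_def by simp
lemma Nc_dim[simp]: "dim_row (Nc n E) = n" "dim_col (Nc n E) = n" unfolding Nc_def by simp_all

lemma Nc_pow_zero:
  assumes E: "E \<subseteq> {1..n} \<times> {1..n}" and n: "n \<ge> 1"
  shows "Nc n E ^\<^sub>m n = 0\<^sub>m n n \<longleftrightarrow> acyclic E"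
proof -
  have hom: "semiring_hom (of_nat :: nat \<Rightarrow> complex)" by unfold_locales auto
  have eq: "Nc n E ^\<^sub>m n = map_mat of_nat (Nnat n E ^\<^sub>m n)"
    unfolding Nc_def by (rule semiring_hom.mat_hom_pow[OF hom Nnat_carrier, symmetric])
  have "map_mat (of_nat :: nat \<Rightarrow> complex) (Nnat n E ^\<^sub>m n) = 0\<^sub>m n n \<longleftrightarrow> Nnat n E ^\<^sub>m n = 0\<^sub>m n n"
  proof
    assume h: "map_mat (of_nat :: nat \<Rightarrow> complex) (Nnat n E ^\<^sub>m n) = 0\<^sub>m n n"
    show "Nnat n E ^\<^sub>m n = 0\<^sub>m n n"
    proof (rule eq_matI)
      fix i j assume ij: "i < dim_row (0\<^sub>m n n :: nat mat)" "j < dim_col (0\<^sub>m n n :: nat mat)"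
      from arg_cong[OF h, of "\<lambda>M. M $$ (i,j)"] ij
      show "(Nnat n E ^\<^sub>m n) $$ (i,j) = 0\<^sub>m n n $$ (i,j)" by simp
    qed auto
  qed auto
  then show ?thesis unfolding eq Nnat_pow_zero[OF E n] .
qed

lemma nil_eig:
  fixes N :: "complex mat"
  assumes N: "N \<in> carrier_mat n n" and nil: "N ^\<^sub>m n = 0\<^sub>m n n" and ev: "eigenvalue (1\<^sub>m n + N) z"
  shows "z = 1"
proof -
  from ev obtain v where v: "v \<in> carrier_vec n" "v \<noteq> 0\<^sub>v n" and Av: "(1\<^sub>m n + N) *\<^sub>v v = z \<cdot>\<^sub>v v"
    unfolding eigenvalue_def eigenvector_def using N by auto
  have "N *\<^sub>v v = (z - 1) \<cdot>\<^sub>v v"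
  proof (rule eq_vecI)
    fix i assume "i < dim_vec ((z - 1) \<cdot>\<^sub>v v)"
    then have i: "i < n" using v by simp
    have "((1\<^sub>m n + N) *\<^sub>v v) $ i = (z \<cdot>\<^sub>v v) $ i" using Av by simp
    then have "v $ i + (N *\<^sub>v v) $ i = z * v $ i"
      using i N v by (simp add: add_scalar_prod_distrib[of _ n])
    then show "(N *\<^sub>v v) $ i = ((z - 1) \<cdot>\<^sub>v v) $ i" using i v by (simp add: algebra_simps)
  qed (insert N v, auto)
  then have "eigenvector N v (z - 1)" unfolding eigenvector_def using v N by auto
  from eigenvector_pow[OF N this, of n] have "0\<^sub>m n n *\<^sub>v v = (z - 1) ^ n \<cdot>\<^sub>v v" using nil by simp
  moreover have "0\<^sub>m n n *\<^sub>v v = 0\<^sub>v n" by (rule eq_vecI, insert v, auto simp: scalar_prod_def)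
  ultimately have "(z - 1) ^ n \<cdot>\<^sub>v v = 0\<^sub>v n" by simp
  moreover from v obtain i where i: "i < n" "v $ i \<noteq> 0" by (metis carrier_vecD eq_vecI index_zero_vec(1) index_zero_vec(2))
  ultimately have "(z - 1) ^ n * v $ i = 0" by (metis index_smult_vec(1) index_zero_vec(1) carrier_vecD v(1))
  with i show "z = 1" by simp
qed

theorem theorem1:
  fixes n :: nat
  assumes "n \<ge> 1"
  shows "card {E :: (nat \<times> nat) set. E \<subseteq> {1..n} \<times> {1..n} \<and> acyclic E}
       = card {A :: complex mat. A \<in> carrier_mat n n
                 \<and> (\<forall>i<n. \<forall>j<n. A $$ (i, j) \<in> {0, 1})
                 \<and> (\<forall>z. eigenvalue A z \<longrightarrow> z \<in> \<real> \<and> Re z > 0)}"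
proof -
  note n = assms
  let ?S = "{E :: (nat \<times> nat) set. E \<subseteq> {1..n} \<times> {1..n} \<and> acyclic E}"
  let ?T = "{A :: complex mat. A \<in> carrier_mat n n
                 \<and> (\<forall>i<n. \<forall>j<n. A $$ (i, j) \<in> {0, 1})
                 \<and> (\<forall>z. eigenvalue A z \<longrightarrow> z \<in> \<real> \<and> Re z > 0)}"
  define f where "f E = 1\<^sub>m n + Nc n E" for E
  define g where "g A = {(Suc i, Suc j) | i j. i < n \<and> j < n \<and> i \<noteq> j \<and> A $$ (i,j) = 1}" for A :: "complex mat"
  have f_index: "f E $$ (i,j) = (if i = j then 1 else 0) + (if (Suc i, Suc j) \<in> E then 1 else 0)"
    if "i < n" "j < n" for E i j using that unfolding f_def by simp
  have f_carr: "f E \<in> carrier_mat n n" for E unfolding f_def by simp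
  have noloop: "(x,x) \<notin> E" if "acyclic E" for E x
    using that unfolding acyclic_def by auto
  have "bij_betw f ?S ?T"
  proof (rule bij_betw_byWitness[where f' = g])
    show "\<forall>E\<in>?S. g (f E) = E"
    proof
      fix E assume E: "E \<in> ?S"
      show "g (f E) = E"
      proof
        show "g (f E) \<subseteq> E"
        proof
          fix p assume "p \<in> g (f E)"
          then obtain i j where p: "p = (Suc i, Suc j)" "i < n" "j < n" "i \<noteq> j" "f E $$ (i,j) = 1"
            unfolding g_def by blast
          from p(2-5) f_index[of i j E] show "p \<in> E" unfolding p(1) by (simp split: if_splits)
        qed
        show "E \<subseteq> g (f E)"
        proof
          fix p assume p: "p \<in> E"
          with E obtain a b where ab: "p = (a,b)" "a \<in> {1..n}" "b \<in> {1..n}" by auto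
          then obtain i j where ij: "a = Suc i" "b = Suc j" "i < n" "j < n"
            by (cases a; cases b) auto
          have "i \<noteq> j" using noloop[of E a] E p ab ij by auto
          then show "p \<in> g (f E)" unfolding g_def using ab ij p f_index by auto
        qed
      qed
    qed
  next
    show "\<forall>A\<in>?T. f (g A) = A"
    proof
      fix A assume A: "A \<in> ?T"
      from spectral[of A n] A have diag: "\<forall>i<n. A $$ (i,i) = 1" by auto
      show "f (g A) = A"
      proof (rule eq_matI)
        fix i j assume ij: "i < dim_row A" "j < dim_col A"
        then have ij': "i < n" "j < n" using A by auto
        show "f (g A) $$ (i,j) = A $$ (i,j)"
        proof (cases "i = j")
          case True
          have "(Suc i, Suc j) \<notin> g A" using True unfolding g_def by auto
          then show ?thesis using True ij' f_index diag by simp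
        next
          case False
          have "(Suc i, Suc j) \<in> g A \<longleftrightarrow> A $$ (i,j) = 1" using False ij' unfolding g_def by auto
          then show ?thesis using False ij' f_index A by auto
        qed
      qed (insert A f_carr, auto)
    qed
  next
    show "f ` ?S \<subseteq> ?T"
    proof
      fix A assume "A \<in> f ` ?S"
      then obtain E where E: "E \<in> ?S" and A: "A = f E" by auto
      have "Nc n E ^\<^sub>m n = 0\<^sub>m n n" using Nc_pow_zero[OF _ n, of E] E by auto
      then have ev: "eigenvalue A z \<Longrightarrow> z = 1" for z using nil_eig[of "Nc n E" n z] A unfolding f_def by auto
      have ent: "\<forall>i<n. \<forall>j<n. A $$ (i, j) \<in> {0, 1}"
      proof (intro allI impI)
        fix i j assume ij: "i < n" "j < n"
        show "A $$ (i, j) \<in> {0, 1}"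
        proof (cases "i = j")
          case True
          have "(Suc i, Suc j) \<notin> E" using noloop[of E "Suc i"] E True by auto
          then show ?thesis using f_index[OF ij, of E] True unfolding A by simp
        next
          case False
          then show ?thesis using f_index[OF ij, of E] unfolding A by simp
        qed
      qed
      have ev2: "\<forall>z. eigenvalue A z \<longrightarrow> z \<in> \<real> \<and> Re z > 0"
      proof (intro allI impI)
        fix z assume "eigenvalue A z"
        then have "z = 1" by (rule ev)
        then show "z \<in> \<real> \<and> Re z > 0" by simp
      qed
      have "A \<in> carrier_mat n n" using f_carr A by simp
      with ev2 ent show "A \<in> ?T" by blast
    qed
  next
    show "g ` ?T \<subseteq> ?S"
    proof
      fix E assume "E \<in> g ` ?T"
      then obtain A where A: "A \<in> ?T" and E: "E = g A" by auto
      from spectral[of A n] A have nil: "char_matrix A 1 ^\<^sub>m n = 0\<^sub>m n n"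
        and diag: "\<forall>i<n. A $$ (i,i) = 1" by auto
      have Esub: "E \<subseteq> {1..n} \<times> {1..n}" unfolding E g_def by auto
      have "char_matrix A 1 = Nc n E"
      proof (rule eq_matI)
        fix i j assume ij: "i < dim_row (Nc n E)" "j < dim_col (Nc n E)"
        then have ij': "i < n" "j < n" by auto
        have "(Suc i, Suc j) \<in> E \<longleftrightarrow> i \<noteq> j \<and> A $$ (i,j) = 1" using ij' unfolding E g_def by auto
        moreover have "char_matrix A 1 $$ (i,j) = A $$ (i,j) - (if i = j then 1 else 0)"
          using ij' A unfolding char_matrix_def by auto
        moreover have "A $$ (i,j) = 0 \<or> A $$ (i,j) = 1" using A ij' by auto
        ultimately show "char_matrix A 1 $$ (i,j) = Nc n E $$ (i,j)"
          using ij' diag by (cases "i = j") auto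
      qed (insert A, auto simp: char_matrix_def)
      with nil have "Nc n E ^\<^sub>m n = 0\<^sub>m n n" by simp
      then have "acyclic E" using Nc_pow_zero[OF Esub n] by simp
      with Esub show "E \<in> ?S" by auto
    qed
  qed
  then show ?thesis by (rule bij_betw_same_card)
qed

end
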